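(* Let $\oplus$ be a combinator. Then $\oplus$ satisfies ($\oplus$PAR): for every pair $\langle\preceq_1,\preceq_2\rangle$ in its domain and all $x,y \in W$, if $x \prec_{1\oplus 2} y$ then for each $i \in \{1,2\}$ there exists $z$ with $x \sim_{1\oplus 2} z$ and $z \prec_i y$; if and only if it satisfies ($\oplus$SB): for every pair in its domain and every $S \subseteq W$, if $x \prec_{1\oplus 2} y$ for every $x \in S^c$ and $y \in S$, then $\min(\preceq_1, S) \cup \min(\preceq_2, S) \subseteq \min(\preceq_{1\oplus 2}, S)$.
   Context: $W$ is a finite nonempty set (of possible worlds); $S^c$ is the complement of $S$ in $W$. A tpo is a total preorder on $W$; $\prec$, $\sim$ its strict and symmetric parts. For $S \subseteq W$, $\min(\preceq, S) = \{x \in S : x \preceq y\ \forall y \in S\}$. A combinator $\oplus$ maps pairs of tpos $\langle\preceq_1,\preceq_2\rangle$ in its domain to a tpo $\preceq_{1\oplus 2}$, with strict part $\prec_{1\oplus 2}$ and symmetric part $\sim_{1\oplus 2}$. *)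

theory Defs
  imports Main
begin

text \<open>Possible worlds W are the elements of a finite type 'w (nonempty automatically).
  A relation on W is a binary predicate; preceq x y reads x \<preceq> y.\<close>

type_synonym 'w rel2 = "'w \<Rightarrow> 'w \<Rightarrow> bool"

definition tpo :: "'w rel2 \<Rightarrow> bool" where
  "tpo r \<longleftrightarrow> (\<forall>x y. r x y \<or> r y x) \<and> (\<forall>x y z. r x y \<longrightarrow> r y z \<longrightarrow> r x z)"

definition strict :: "'w rel2 \<Rightarrow> 'w rel2" where
  "strict r x y \<longleftrightarrow> r x y \<and> \<not> r y x"

definition symp_part :: "'w rel2 \<Rightarrow> 'w rel2" where
  "symp_part r x y \<longleftrightarrow> r x y \<and> r y x"

definition min_set :: "'w rel2 \<Rightarrow> 'w set \<Rightarrow> 'w set" where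
  "min_set r S = {x \<in> S. \<forall>y\<in>S. r x y}"

definition combinator :: "('w rel2 \<times> 'w rel2) set \<Rightarrow> ('w rel2 \<Rightarrow> 'w rel2 \<Rightarrow> 'w rel2) \<Rightarrow> bool" where
  "combinator D c \<longleftrightarrow> (\<forall>(r1, r2)\<in>D. tpo r1 \<and> tpo r2 \<and> tpo (c r1 r2))"

definition PAR :: "('w rel2 \<times> 'w rel2) set \<Rightarrow> ('w rel2 \<Rightarrow> 'w rel2 \<Rightarrow> 'w rel2) \<Rightarrow> bool" where
  "PAR D c \<longleftrightarrow> (\<forall>(r1, r2)\<in>D. \<forall>x y. strict (c r1 r2) x y \<longrightarrow>
      (\<forall>ri\<in>{r1, r2}. \<exists>z. symp_part (c r1 r2) x z \<and> strict ri z y))"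

definition SB :: "('w rel2 \<times> 'w rel2) set \<Rightarrow> ('w rel2 \<Rightarrow> 'w rel2 \<Rightarrow> 'w rel2) \<Rightarrow> bool" where
  "SB D c \<longleftrightarrow> (\<forall>(r1, r2)\<in>D. \<forall>S. (\<forall>x\<in>-S. \<forall>y\<in>S. strict (c r1 r2) x y) \<longrightarrow>
      min_set r1 S \<union> min_set r2 S \<subseteq> min_set (c r1 r2) S)"

end

theory Submission
  imports Defs
begin

lemma tpo_total: "tpo r \<Longrightarrow> r x y \<or> r y x" unfolding tpo_def by blast
lemma tpo_trans: "tpo r \<Longrightarrow> r x y \<Longrightarrow> r y z \<Longrightarrow> r x z" unfolding tpo_def by blast

lemma min_exists:
  assumes "tpo r" "finite S" "S \<noteq> {}"
  shows "\<exists>m. m \<in> min_set r S"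
  using assms(2,3)
proof (induction S rule: finite_ne_induct)
  case (singleton x)
  then show ?case using tpo_total[OF assms(1), of x x] unfolding min_set_def by auto
next
  case (insert x F)
  then obtain m where m: "m \<in> min_set r F" by blast
  show ?case
  proof (cases "r x m")
    case True
    then show ?thesis using m tpo_total[OF assms(1), of x x] tpo_trans[OF assms(1), of x m]
      unfolding min_set_def by auto
  next
    case False
    then have "r m x" using tpo_total[OF assms(1)] by blast
    then show ?thesis using m unfolding min_set_def by blast
  qed
qed

theorem proposition9:
  fixes D :: "(('w::finite) rel2 \<times> 'w rel2) set"
    and c :: "'w rel2 \<Rightarrow> 'w rel2 \<Rightarrow> 'w rel2"
  assumes "combinator D c"
  shows "PAR D c \<longleftrightarrow> SB D c"
proof
  assume P: "PAR D c"
  show "SB D c"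
    unfolding SB_def
  proof (clarify)
    fix r1 r2 S w
    assume D: "(r1, r2) \<in> D" and H: "\<forall>x\<in>-S. \<forall>y\<in>S. strict (c r1 r2) x y"
      and w: "w \<in> min_set r1 S \<union> min_set r2 S"
    have t: "tpo r1" "tpo r2" "tpo (c r1 r2)" using assms D unfolding combinator_def by auto
    have PP: "\<And>x y. strict (c r1 r2) x y \<Longrightarrow> \<forall>ri\<in>{r1, r2}. \<exists>z. symp_part (c r1 r2) x z \<and> strict ri z y"
      using P D unfolding PAR_def by blast
    obtain ri where ri: "ri \<in> {r1, r2}" "w \<in> min_set ri S" using w by blast
    show "w \<in> min_set (c r1 r2) S"
    proof (rule ccontr)
      assume "w \<notin> min_set (c r1 r2) S"
      then obtain y where y: "y \<in> S" "\<not> c r1 r2 w y" using ri unfolding min_set_def by blast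
      then have "strict (c r1 r2) y w" using tpo_total[OF t(3), of w y] unfolding strict_def by blast
      then obtain z where z: "symp_part (c r1 r2) y z" "strict ri z w" using PP ri(1) by blast
      have "z \<in> S"
      proof (rule ccontr)
        assume "z \<notin> S"
        then have "strict (c r1 r2) z y" using H y(1) by blast
        then show False using z(1) unfolding strict_def symp_part_def by blast
      qed
      then show False using z(2) ri(2) unfolding min_set_def strict_def by blast
    qed
  qed
next
  assume SB: "SB D c"
  show "PAR D c"
    unfolding PAR_def
  proof (clarify)
    fix r1 r2 x y ri
    assume D: "(r1, r2) \<in> D" and xy: "strict (c r1 r2) x y" and ri: "ri \<in> {r1, r2}"
    have t: "tpo r1" "tpo r2" "tpo (c r1 r2)" using assms D unfolding combinator_def by auto
    have tri: "tpo ri" using t ri by auto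
    define S where "S = {w. c r1 r2 x w}"
    have H: "\<forall>u\<in>-S. \<forall>v\<in>S. strict (c r1 r2) u v"
    proof (intro ballI)
      fix u v assume u: "u \<in> -S" and v: "v \<in> S"
      have nu: "\<not> c r1 r2 x u" using u unfolding S_def by simp
      have cv: "c r1 r2 x v" using v unfolding S_def by simp
      have ux: "c r1 r2 u x" using nu tpo_total[OF t(3), of x u] by simp
      have "c r1 r2 u v" using tpo_trans[OF t(3) ux cv] .
      moreover have "\<not> c r1 r2 v u" using tpo_trans[OF t(3) cv] nu by blast
      ultimately show "strict (c r1 r2) u v" unfolding strict_def by simp
    qed
    have SB': "min_set r1 S \<union> min_set r2 S \<subseteq> min_set (c r1 r2) S"
      proof -
      have "\<forall>(r1, r2)\<in>D. \<forall>S. (\<forall>x\<in>-S. \<forall>y\<in>S. strict (c r1 r2) x y) \<longrightarrow>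
        min_set r1 S \<union> min_set r2 S \<subseteq> min_set (c r1 r2) S" using SB unfolding SB_def .
      from bspec[OF this D] have "\<forall>S. (\<forall>x\<in>-S. \<forall>y\<in>S. strict (c r1 r2) x y) \<longrightarrow>
        min_set r1 S \<union> min_set r2 S \<subseteq> min_set (c r1 r2) S" by (simp only: prod.case)
      then show ?thesis using H by simp
    qed
    have sub: "min_set ri S \<subseteq> min_set (c r1 r2) S"
      using SB' ri by auto
    have xS: "x \<in> S" and yS: "y \<in> S" using tpo_total[OF t(3), of x x] xy unfolding S_def strict_def by auto
    obtain m where m: "m \<in> min_set ri S" using min_exists[OF tri, of S] xS by auto
    have mc: "m \<in> min_set (c r1 r2) S" using m sub by blast
    have "symp_part (c r1 r2) x m" using mc xS unfolding min_set_def S_def symp_part_def by blast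
    moreover have "strict ri m y"
    proof -
      have "ri m y" using m yS unfolding min_set_def by blast
      moreover have "\<not> ri y m"
      proof
        assume "ri y m"
        then have "y \<in> min_set ri S" using m yS tpo_trans[OF tri, of y m] unfolding min_set_def by blast
        then have "y \<in> min_set (c r1 r2) S" using sub by blast
        then have "c r1 r2 y x" using xS unfolding min_set_def by blast
        then show False using xy unfolding strict_def by blast
      qed
      ultimately show ?thesis unfolding strict_def by blast
    qed
    ultimately show "\<exists>z. symp_part (c r1 r2) x z \<and> strict ri z y" by blast
  qed
qed

end
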